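(* Let $a$ be a real function of bounded variation with support contained in $(-1/2,1/2)$, and let $b\in L^1$ be supported in $[0,1]$ with zero average. Then $$\|a*b\|_{L^1([-1,2])}\le\mathrm{Var}(a)\,\|b\|_W.$$ As a consequence $\|a\,\hat*\,b\|_{L^1([0,1])}\le\mathrm{Var}(a)\|b\|_W$, and therefore $\|N_\xi\|_{W\to L^1}\le\mathrm{Var}(\rho_\xi)=\xi^{-1}\mathrm{Var}(\rho)$.
   Context: $*$ is the usual convolution on $\mathbb R$. For zero-average $f\in L^1([0,1])$, $\|f\|_W:=\|F\|_{L^1}$ with $F(x)=\int_0^xf(t)\,dt$. With $\pi(x)=\min_{i\in\mathbb Z}|x-2i|$, $a\,\hat*\,f:=\pi_*(a*\hat f)$, where $\hat f$ is $f$ extended by $0$ outside $[0,1]$ and $\pi_*$ the pushforward by $\pi$. $\rho$ is of bounded variation supported in $[-1/2,1/2]$ with $\int\rho=1$, $\rho_\xi(x)=\xi^{-1}\rho(x/\xi)$, $N_\xi f=\rho_\xi\,\hat*\,f$. $\mathrm{Var}$ is total variation. *)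

theory Defs
  imports "HOL-Analysis.Analysis"
begin

definition variation_sums :: "(real \<Rightarrow> real) \<Rightarrow> real set" where
  "variation_sums f =
     {(\<Sum>i<n. \<bar>f (x (Suc i)) - f (x i)\<bar>) | x n. \<forall>i<n. x i \<le> x (Suc i)}"

definition bounded_variation :: "(real \<Rightarrow> real) \<Rightarrow> bool" where
  "bounded_variation f \<longleftrightarrow> bdd_above (variation_sums f)"

definition Var :: "(real \<Rightarrow> real) \<Rightarrow> real" where
  "Var f = Sup (variation_sums f)"

definition conv :: "(real \<Rightarrow> real) \<Rightarrow> (real \<Rightarrow> real) \<Rightarrow> real \<Rightarrow> real" where
  "conv a b x = (\<integral>y. a (x - y) * b y \<partial>lborel)"

definition hat_ext :: "(real \<Rightarrow> real) \<Rightarrow> real \<Rightarrow> real" where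
  "hat_ext f x = (if x \<in> {0..1} then f x else 0)"

definition normW :: "(real \<Rightarrow> real) \<Rightarrow> real" where
  "normW f = (\<integral>x\<in>{0..1}. \<bar>\<integral>t\<in>{0..x}. f t \<partial>lborel\<bar> \<partial>lborel)"

definition fold_pi :: "real \<Rightarrow> real" where
  "fold_pi x = (INF i\<in>(UNIV::int set). \<bar>x - 2 * of_int i\<bar>)"

text \<open>Density on [0,1] of the pushforward by pi of the measure h dx:
  g(y) = sum over the preimages 2i+y, 2i-y of y under pi.\<close>
definition pushforward_pi :: "(real \<Rightarrow> real) \<Rightarrow> real \<Rightarrow> real" where
  "pushforward_pi h y = (\<Sum>\<^sub>\<infinity>i\<in>(UNIV::int set). h (2 * of_int i + y) + h (2 * of_int i - y))"

definition hat_conv :: "(real \<Rightarrow> real) \<Rightarrow> (real \<Rightarrow> real) \<Rightarrow> real \<Rightarrow> real" where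
  "hat_conv a f = pushforward_pi (conv a (hat_ext f))"

definition rho_xi :: "(real \<Rightarrow> real) \<Rightarrow> real \<Rightarrow> real \<Rightarrow> real" where
  "rho_xi \<rho> \<xi> x = \<rho> (x / \<xi>) / \<xi>"

definition N_op :: "(real \<Rightarrow> real) \<Rightarrow> real \<Rightarrow> (real \<Rightarrow> real) \<Rightarrow> real \<Rightarrow> real" where
  "N_op \<rho> \<xi> f = hat_conv (rho_xi \<rho> \<xi>) f"

end

theory Submission
  imports Defs
begin


lemma vs_zero: "0 \<in> variation_sums f"
  unfolding variation_sums_def by (rule CollectI, rule exI[of _ "\<lambda>i. 0"], rule exI[of _ 0]) simp

lemma vs_le_Var: "bounded_variation f \<Longrightarrow> s \<in> variation_sums f \<Longrightarrow> s \<le> Var f"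
  unfolding bounded_variation_def Var_def by (rule cSup_upper)

lemma Var_ge0: "bounded_variation f \<Longrightarrow> 0 \<le> Var f"
  using vs_le_Var vs_zero by blast

lemma vs_intro: "\<forall>i<n. p i \<le> p (Suc i) \<Longrightarrow> (\<Sum>i<n. \<bar>f (p (Suc i)) - f (p i)\<bar>) \<in> variation_sums f"
  unfolding variation_sums_def by (rule CollectI, rule exI[of _ p], rule exI[of _ n]) simp

lemma vs_elim:
  assumes "s \<in> variation_sums f"
  obtains p n where "s = (\<Sum>i<n. \<bar>f (p (Suc i)) - f (p i)\<bar>)" "\<forall>i<n. p i \<le> p (Suc i)"
  using assms unfolding variation_sums_def mem_Collect_eq by (elim exE conjE) (rule that)

lemma vs_two: assumes "x \<le> y" shows "\<bar>f y - f x\<bar> \<in> variation_sums f"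
proof -
  have "\<bar>f y - f x\<bar> = (\<Sum>i<1. \<bar>f ((\<lambda>i. if i = 0 then x else y) (Suc i)) - f ((\<lambda>i. if i = 0 then x else y) i)\<bar>)"
    by simp
  moreover have "\<forall>i<1. (\<lambda>i. if i = 0 then x else y) i \<le> (\<lambda>i. if i = 0 then x else y) (Suc i)"
    using assms by simp
  ultimately show ?thesis using vs_intro[of 1 "\<lambda>i. if i = 0 then x else y" f] by simp
qed

lemma absdiff_le_Var: "bounded_variation f \<Longrightarrow> \<bar>f y - f x\<bar> \<le> Var f"
proof (cases "x \<le> y")
  case True
  assume bv: "bounded_variation f"
  show ?thesis using vs_le_Var[OF bv vs_two[OF True]] .
next
  case False
  assume bv: "bounded_variation f"
  have "y \<le> x" using False by simp
  from vs_le_Var[OF bv vs_two[OF this]] show ?thesis by (simp add: abs_minus_commute)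
qed

definition Vf :: "(real \<Rightarrow> real) \<Rightarrow> real \<Rightarrow> real" where
  "Vf a x = Var (\<lambda>t. a (min t x))"

lemma vs_clamp_subset: "variation_sums (\<lambda>t. a (min t x)) \<subseteq> variation_sums a"
proof
  fix s assume "s \<in> variation_sums (\<lambda>t. a (min t x))"
  then obtain p n where s: "s = (\<Sum>i<n. \<bar>a (min (p (Suc i)) x) - a (min (p i) x)\<bar>)"
    and p: "\<forall>i<n. p i \<le> p (Suc i)" by (rule vs_elim)
  have "\<forall>i<n. (\<lambda>i. min (p i) x) i \<le> (\<lambda>i. min (p i) x) (Suc i)" using p by (auto simp: min_def)
  from vs_intro[OF this, of a] show "s \<in> variation_sums a" by (simp add: s)
qed

lemma clamp_bv: "bounded_variation a \<Longrightarrow> bounded_variation (\<lambda>t. a (min t x))"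
  unfolding bounded_variation_def by (erule bdd_above_mono[OF _ vs_clamp_subset])

lemma V_le: "bounded_variation a \<Longrightarrow> Vf a x \<le> Var a"
  unfolding Vf_def Var_def bounded_variation_def
  by (rule cSup_subset_mono) (use vs_zero[of "\<lambda>t. a (min t x)"] vs_clamp_subset[of a x] in auto)

lemma V_incr:
  assumes bv: "bounded_variation a" and xy: "x \<le> y"
  shows "Vf a x + \<bar>a y - a x\<bar> \<le> Vf a y"
proof -
  have "\<forall>s \<in> variation_sums (\<lambda>t. a (min t x)). s \<le> Vf a y - \<bar>a y - a x\<bar>"
  proof
    fix s assume "s \<in> variation_sums (\<lambda>t. a (min t x))"
    then obtain p n where s: "s = (\<Sum>i<n. \<bar>a (min (p (Suc i)) x) - a (min (p i) x)\<bar>)"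
      and p: "\<forall>i<n. p i \<le> p (Suc i)" by (rule vs_elim)
    define q where "q i = (if i \<le> n then min (p i) x else if i = Suc n then x else y)" for i
    have qm: "\<forall>i<Suc (Suc n). q i \<le> q (Suc i)"
    proof (intro allI impI)
      fix i assume i: "i < Suc (Suc n)"
      consider "i < n" | "i = n" | "i = Suc n" using i by linarith
      then show "q i \<le> q (Suc i)"
      proof cases
        case 1 then show ?thesis using p by (simp add: q_def min.coboundedI1 min_le_iff_disj)
      qed (use xy in \<open>auto simp: q_def\<close>)
    qed
    have qy: "i \<le> Suc n \<Longrightarrow> q i \<le> y" for i using xy by (auto simp: q_def)
    define S where "S = (\<Sum>i<Suc (Suc n). \<bar>a (min (q (Suc i)) y) - a (min (q i) y)\<bar>)"
    have "S \<in> variation_sums (\<lambda>t. a (min t y))"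
      unfolding S_def by (rule vs_intro[OF qm])
    hence "S \<le> Vf a y" unfolding Vf_def by (rule vs_le_Var[OF clamp_bv[OF bv]])
    moreover have "(\<Sum>i<n. \<bar>a (min (q (Suc i)) y) - a (min (q i) y)\<bar>) = s"
      unfolding s
    proof (rule sum.cong)
      fix i assume "i \<in> {..<n}"
      then have "q i = min (p i) x" "q (Suc i) = min (p (Suc i)) x" "q i \<le> y" "q (Suc i) \<le> y"
        using qy[of i] qy[of "Suc i"] by (auto simp: q_def)
      then show "\<bar>a (min (q (Suc i)) y) - a (min (q i) y)\<bar> = \<bar>a (min (p (Suc i)) x) - a (min (p i) x)\<bar>"
        by (simp add: min_absorb1)
    qed simp
    moreover have "q (Suc n) = x" "q (Suc (Suc n)) = y" by (auto simp: q_def)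
    ultimately have "s + \<bar>a (min x y) - a (min (q n) y)\<bar> + \<bar>a y - a (min x y)\<bar> \<le> Vf a y"
      unfolding S_def by simp
    then show "s \<le> Vf a y - \<bar>a y - a x\<bar>" using xy by (simp add: min_absorb1)
  qed
  then have "Vf a x \<le> Vf a y - \<bar>a y - a x\<bar>"
    unfolding Vf_def Var_def using vs_zero[of "\<lambda>t. a (min t x)"] by (intro cSup_least) auto
  then show ?thesis by simp
qed



lemma abs_integral_le_nn: "ennreal \<bar>\<integral>x. f x \<partial>M\<bar> \<le> (\<integral>\<^sup>+x. ennreal \<bar>f x\<bar> \<partial>M)"
proof (cases "integrable M f")
  case True then show ?thesis using integral_norm_bound_ennreal[OF True] by simp
next
  case False then show ?thesis by (simp add: not_integrable_integral_eq)
qed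

lemma jordan:
  fixes a :: "real \<Rightarrow> real"
  assumes bv: "bounded_variation a" and supp: "\<And>x. \<bar>x\<bar> > K \<Longrightarrow> a x = 0"
  defines "P \<equiv> \<lambda>x. (Vf a x + a x) / 2" and "N \<equiv> \<lambda>x. (Vf a x - a x) / 2"
  shows "mono P" "mono N" "\<And>x. 0 \<le> P x" "\<And>x. P x \<le> Var a / 2"
    "\<And>x. 0 \<le> N x" "\<And>x. N x \<le> Var a / 2" "\<And>x. a x = P x - N x"
proof -
  have low: "\<bar>a x\<bar> \<le> Vf a x" for x
  proof -
    define x0 where "x0 = min x (- \<bar>K\<bar> - 1)"
    have "x0 \<le> x" "\<bar>x0\<bar> > K" by (auto simp: x0_def)
    have "Vf a x0 + \<bar>a x - a x0\<bar> \<le> Vf a x" by (rule V_incr[OF bv \<open>x0 \<le> x\<close>])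
    moreover have "0 \<le> Vf a x0" unfolding Vf_def by (rule Var_ge0[OF clamp_bv[OF bv]])
    moreover have "a x0 = 0" using supp \<open>\<bar>x0\<bar> > K\<close> by blast
    ultimately show ?thesis by simp
  qed
  have up: "Vf a x + \<bar>a x\<bar> \<le> Var a" for x
  proof -
    define y where "y = max x (\<bar>K\<bar> + 1)"
    have "x \<le> y" "\<bar>y\<bar> > K" by (auto simp: y_def)
    have "Vf a x + \<bar>a y - a x\<bar> \<le> Vf a y" by (rule V_incr[OF bv \<open>x \<le> y\<close>])
    moreover have "Vf a y \<le> Var a" by (rule V_le[OF bv])
    moreover have "a y = 0" using supp \<open>\<bar>y\<bar> > K\<close> by blast
    ultimately show ?thesis by simp
  qed
  have inc: "x \<le> y \<Longrightarrow> Vf a x + \<bar>a y - a x\<bar> \<le> Vf a y" for x y by (rule V_incr[OF bv])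
  show "mono P" unfolding mono_def P_def
  proof (intro allI impI)
    fix x y :: real assume "x \<le> y"
    have "Vf a x + a x \<le> Vf a y + a y"
      using inc[OF \<open>x \<le> y\<close>] abs_ge_minus_self[of "a y - a x"] by linarith
    then show "(Vf a x + a x) / 2 \<le> (Vf a y + a y) / 2" by simp
  qed
  show "mono N" unfolding mono_def N_def
  proof (intro allI impI)
    fix x y :: real assume "x \<le> y"
    have "Vf a x - a x \<le> Vf a y - a y"
      using inc[OF \<open>x \<le> y\<close>] abs_ge_self[of "a y - a x"] by linarith
    then show "(Vf a x - a x) / 2 \<le> (Vf a y - a y) / 2" by simp
  qed
  show "0 \<le> P x" for x unfolding P_def using low[of x] by simp
  show "P x \<le> Var a / 2" for x unfolding P_def using up[of x] by simp
  show "0 \<le> N x" for x unfolding N_def using low[of x] by simp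
  show "N x \<le> Var a / 2" for x unfolding N_def using up[of x] by simp
  show "a x = P x - N x" for x unfolding P_def N_def by (simp add: field_simps)
qed

lemma bv_measurable:
  assumes bv: "bounded_variation a" and supp: "\<And>x. \<bar>x\<bar> > K \<Longrightarrow> a x = 0"
  shows "a \<in> borel_measurable borel"
proof -
  define P where "P = (\<lambda>x. (Vf a x + a x) / 2)"
  define N where "N = (\<lambda>x. (Vf a x - a x) / 2)"
  have "mono P" "mono N" "\<And>x. a x = P x - N x"
    using jordan[OF bv supp] unfolding P_def N_def by auto
  then have "a = (\<lambda>x. P x - N x)" by auto
  moreover have "P \<in> borel_measurable borel" "N \<in> borel_measurable borel"
    using \<open>mono P\<close> \<open>mono N\<close> by (auto intro: borel_measurable_mono)
  ultimately show ?thesis by simp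
qed

definition Bf :: "(real \<Rightarrow> real) \<Rightarrow> real \<Rightarrow> real" where
  "Bf b u = (\<integral>y. indicator {..u} y * b y \<partial>lborel)"

lemma Bf_measurable:
  fixes b :: "real \<Rightarrow> real"
  assumes [measurable]: "b \<in> borel_measurable borel"
  shows "Bf b \<in> borel_measurable borel"
proof -
  have [measurable]: "(\<lambda>(u::real, y::real). indicator {..u} y * b y :: real) \<in> borel_measurable (borel \<Otimes>\<^sub>M lborel)"
  proof -
    have e: "(\<lambda>(u::real, y::real). indicator {..u} y * b y :: real) = (\<lambda>p. (if snd p \<le> fst p then 1 else 0) * b (snd p))"
      by (auto simp: indicator_def fun_eq_iff)
    show ?thesis unfolding e by measurable
  qed
  have "(\<lambda>u. \<integral>y. indicator {..u} y * b y \<partial>lborel) \<in> borel_measurable borel"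
    by measurable
  then show ?thesis unfolding Bf_def[abs_def] .
qed

lemma level_bound:
  fixes P b :: "real \<Rightarrow> real"
  assumes mP: "mono P" and bint: "integrable lborel b" and avg: "(\<integral>y. b y \<partial>lborel) = 0"
  shows "(\<integral>\<^sup>+x. ennreal \<bar>\<integral>y. indicator {y. s < P (x - y)} y * b y \<partial>lborel\<bar> \<partial>lborel)
          \<le> (\<integral>\<^sup>+u. ennreal \<bar>Bf b u\<bar> \<partial>lborel)"
proof -
  have [measurable]: "P \<in> borel_measurable borel" using mP by (rule borel_measurable_mono)
  have [measurable]: "b \<in> borel_measurable borel" using bint by (simp add: borel_measurable_integrable)
  define U where "U = {z. s < P z}"
  have upU: "z \<in> U \<Longrightarrow> z \<le> w \<Longrightarrow> w \<in> U" for z w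
    using mP unfolding U_def mono_def by (auto intro: less_le_trans)
  have ind: "indicator {y. s < P (x - y)} y = indicator U (x - y)" for x y :: real
    by (simp add: U_def indicator_def)
  consider "U = {}" | "U = UNIV" | "U \<noteq> {}" "U \<noteq> UNIV" by blast
  then show ?thesis
  proof cases
    case 1
    then show ?thesis by (simp add: ind)
  next
    case 2
    then show ?thesis by (simp add: ind avg)
  next
    case 3
    then obtain w where w: "w \<notin> U" by blast
    have wlt: "z \<in> U \<Longrightarrow> w < z" for z using upU[of z w] w by force
    have bdd: "bdd_below U" using wlt by (meson bdd_below.I less_imp_le)
    define t where "t = Inf U"
    have above: "z > t \<Longrightarrow> z \<in> U" for z
    proof -
      assume "z > t"
      then obtain u where "u \<in> U" "u < z" using cInf_less_iff[OF 3(1) bdd] unfolding t_def by blast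
      then show "z \<in> U" using upU by force
    qed
    have below: "z < t \<Longrightarrow> z \<notin> U" for z
      using cInf_lower[OF _ bdd, of z] unfolding t_def by force
    have eq: "(\<integral>y. indicator {y. s < P (x - y)} y * b y \<partial>lborel) = Bf b (x - t)" for x
      unfolding Bf_def
    proof (rule integral_cong_AE)
      have e: "(\<lambda>y. indicator {y. s < P (x - y)} y * b y) = (\<lambda>y. (if s < P (x - y) then 1 else 0) * b y)"
        by (auto simp: indicator_def fun_eq_iff)
      show "(\<lambda>y. indicator {y. s < P (x - y)} y * b y) \<in> borel_measurable lborel"
        unfolding e by measurable
      have e2: "(\<lambda>y. indicator {..x-t} y * b y) = (\<lambda>y. (if y \<le> x - t then 1 else 0) * b y)"
        by (auto simp: indicator_def fun_eq_iff)
      show "(\<lambda>y. indicator {..x-t} y * b y) \<in> borel_measurable lborel"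
        unfolding e2 by measurable
      show "AE y in lborel. indicator {y. s < P (x - y)} y * b y = indicator {..x - t} y * b y"
        using AE_lborel_singleton[of "x - t"]
      proof eventually_elim
        case (elim y)
        then have "y < x - t \<or> y > x - t" by auto
        then show ?case
        proof
          assume "y < x - t" then have "x - y \<in> U" using above by auto
          then show ?thesis using \<open>y < x - t\<close> by (simp add: ind)
        next
          assume "y > x - t" then have "x - y \<notin> U" using below by auto
          then show ?thesis using \<open>y > x - t\<close> by (simp add: ind)
        qed
      qed
    qed
    have [measurable]: "Bf b \<in> borel_measurable borel" by (rule Bf_measurable) measurable
    have "(\<lambda>u. ennreal \<bar>Bf b u\<bar>) \<in> borel_measurable borel" by measurable
    from nn_integral_real_affine[OF this, of 1 "-t"]
    show ?thesis by (simp add: eq)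
  qed
qed



lemma conv_measurable:
  fixes a b :: "real \<Rightarrow> real"
  assumes [measurable]: "a \<in> borel_measurable borel" "b \<in> borel_measurable borel"
  shows "conv a b \<in> borel_measurable borel"
proof -
  have [measurable]: "(\<lambda>(x::real, y::real). a (x - y) * b y) \<in> borel_measurable (borel \<Otimes>\<^sub>M lborel)"
  proof -
    have e: "(\<lambda>(x::real, y::real). a (x - y) * b y) = (\<lambda>p. a (fst p - snd p) * b (snd p))"
      by (auto simp: fun_eq_iff)
    show ?thesis unfolding e by measurable
  qed
  have "(\<lambda>x. \<integral>y. a (x - y) * b y \<partial>lborel) \<in> borel_measurable borel" by measurable
  then show ?thesis unfolding conv_def[abs_def] .
qed

lemma mono_core:
  fixes P b :: "real \<Rightarrow> real" and c :: real
  assumes mP: "mono P" and P0: "\<And>x. 0 \<le> P x" and Pc: "\<And>x. P x \<le> c"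
    and bint: "integrable lborel b" and avg: "(\<integral>y. b y \<partial>lborel) = 0"
  shows "(\<integral>\<^sup>+x. ennreal \<bar>conv P b x\<bar> \<partial>lborel) \<le> ennreal c * (\<integral>\<^sup>+u. ennreal \<bar>Bf b u\<bar> \<partial>lborel)"
proof -
  have [measurable]: "P \<in> borel_measurable borel" using mP by (rule borel_measurable_mono)
  have [measurable]: "b \<in> borel_measurable borel" using bint by (simp add: borel_measurable_integrable)
  have c0: "0 \<le> c" using P0[of 0] Pc[of 0] by linarith
  define G where "G s x = (\<integral>y. indicator {y. s < P (x - y)} y * b y \<partial>lborel)" for s x
  define Gp where "Gp q = (\<integral>y. (if snd q < P (fst q - y) then 1 else 0) * b y \<partial>lborel)" for q :: "real \<times> real"
  have GG: "G s x = Gp (x, s)" for s x unfolding G_def Gp_def by (simp add: indicator_def of_bool_def)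
  have [measurable]: "Gp \<in> borel_measurable (lborel \<Otimes>\<^sub>M lborel)"
  proof -
    have [measurable]: "(\<lambda>(q::real\<times>real, y::real). (if snd q < P (fst q - y) then 1 else 0) * b y :: real)
        \<in> borel_measurable ((lborel \<Otimes>\<^sub>M lborel) \<Otimes>\<^sub>M lborel)"
    proof -
      have e: "(\<lambda>(q::real\<times>real, y::real). (if snd q < P (fst q - y) then 1 else 0) * b y :: real)
          = (\<lambda>r. (if snd (fst r) < P (fst (fst r) - snd r) then 1 else 0) * b (snd r))"
        by (auto simp: fun_eq_iff)
      show ?thesis unfolding e by measurable
    qed
    show ?thesis unfolding Gp_def[abs_def] by measurable
  qed
  define NB where "NB = (\<integral>\<^sup>+u. ennreal \<bar>Bf b u\<bar> \<partial>lborel)"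
  have lev: "(\<integral>\<^sup>+x. ennreal \<bar>Gp (x, s)\<bar> \<partial>lborel) \<le> NB" for s
    using level_bound[OF mP bint avg, of s] unfolding NB_def GG[symmetric] G_def .
  have pt: "ennreal \<bar>conv P b x\<bar> \<le> (\<integral>\<^sup>+s. indicator {0..c} s * ennreal \<bar>Gp (x, s)\<bar> \<partial>lborel)" for x
  proof -
    define F where "F y s = (if 0 \<le> s \<and> s < P (x - y) then b y else 0)" for y s
    have Fi: "F y = (\<lambda>s. b y * indicator {0..<P (x - y)} s)" for y
      by (auto simp: F_def fun_eq_iff indicator_def)
    have Fabs: "(\<lambda>s. norm (F y s)) = (\<lambda>s. \<bar>b y\<bar> * indicator {0..<P (x - y)} s)" for y
      by (auto simp: F_def fun_eq_iff indicator_def)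
    have inner: "(\<integral>s. F y s \<partial>lborel) = P (x - y) * b y" for y
      unfolding Fi using P0[of "x - y"] by simp
    have innerabs: "(\<integral>s. norm (F y s) \<partial>lborel) = \<bar>b y\<bar> * P (x - y)" for y
      unfolding Fabs using P0[of "x - y"] by simp
    have Fm: "case_prod F \<in> borel_measurable (lborel \<Otimes>\<^sub>M lborel)"
    proof -
      have e: "case_prod F = (\<lambda>p. if 0 \<le> snd p \<and> snd p < P (x - fst p) then b (fst p) else 0)"
        by (auto simp: F_def fun_eq_iff)
      show ?thesis unfolding e by measurable
    qed
    have Fint: "integrable (lborel \<Otimes>\<^sub>M lborel) (case_prod F)"
    proof (rule lborel_pair.Fubini_integrable)
      show "case_prod F \<in> borel_measurable (lborel \<Otimes>\<^sub>M lborel)" by (rule Fm)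
      show "integrable lborel (\<lambda>y. \<integral>s. norm (case_prod F (y, s)) \<partial>lborel)"
        unfolding case_prod_conv innerabs
      proof (rule Bochner_Integration.integrable_bound[where f="\<lambda>y. c * b y"])
        show "integrable lborel (\<lambda>y. c * b y)" using bint by simp
        show "(\<lambda>y. \<bar>b y\<bar> * P (x - y)) \<in> borel_measurable lborel" by measurable
        show "AE y in lborel. norm (\<bar>b y\<bar> * P (x - y)) \<le> norm (c * b y)"
        proof (intro AE_I2)
          fix y
          have "\<bar>b y\<bar> * P (x - y) \<le> \<bar>b y\<bar> * c" by (rule mult_left_mono[OF Pc abs_ge_zero])
          then show "norm (\<bar>b y\<bar> * P (x - y)) \<le> norm (c * b y)"
            using P0[of "x - y"] c0 by (simp add: abs_mult mult.commute)
        qed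
      qed
      show "AE y in lborel. integrable lborel (\<lambda>s. case_prod F (y, s))"
        unfolding case_prod_conv Fi using P0 by simp
    qed
    have "conv P b x = (\<integral>y. \<integral>s. F y s \<partial>lborel \<partial>lborel)"
      unfolding conv_def inner ..
    also have "\<dots> = (\<integral>s. \<integral>y. F y s \<partial>lborel \<partial>lborel)"
      using lborel_pair.Fubini_integral[OF Fint] by simp
    finally have cv: "conv P b x = (\<integral>s. \<integral>y. F y s \<partial>lborel \<partial>lborel)" .
    have Fs: "\<bar>\<integral>y. F y s \<partial>lborel\<bar> \<le> indicator {0..c} s * \<bar>Gp (x, s)\<bar>" for s
    proof (cases "0 \<le> s")
      case True
      have "(\<lambda>y. F y s) = (\<lambda>y. (if s < P (x - y) then 1 else 0) * b y)"
        using True by (auto simp: F_def fun_eq_iff)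
      then have e: "(\<integral>y. F y s \<partial>lborel) = Gp (x, s)" unfolding Gp_def by simp
      show ?thesis
      proof (cases "s \<le> c")
        case True
        then show ?thesis using \<open>0 \<le> s\<close> e by simp
      next
        case False
        have "\<not> s < P (x - y)" for y using Pc[of "x - y"] False by linarith
        then have "(\<lambda>y. F y s) = (\<lambda>y. 0)" by (auto simp: F_def fun_eq_iff)
        then show ?thesis by simp
      qed
    next
      case False
      then have "(\<lambda>y. F y s) = (\<lambda>y. 0)" by (auto simp: F_def fun_eq_iff)
      then show ?thesis by simp
    qed
    have "ennreal \<bar>conv P b x\<bar> \<le> (\<integral>\<^sup>+s. ennreal \<bar>\<integral>y. F y s \<partial>lborel\<bar> \<partial>lborel)"
      unfolding cv by (rule abs_integral_le_nn)
    also have "\<dots> \<le> (\<integral>\<^sup>+s. indicator {0..c} s * ennreal \<bar>Gp (x, s)\<bar> \<partial>lborel)"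
    proof (rule nn_integral_mono)
      fix s
      have "ennreal \<bar>\<integral>y. F y s \<partial>lborel\<bar> \<le> ennreal (indicator {0..c} s * \<bar>Gp (x, s)\<bar>)"
        using Fs[of s] by (rule ennreal_leI)
      also have "\<dots> = indicator {0..c} s * ennreal \<bar>Gp (x, s)\<bar>"
        by (simp add: indicator_def)
      finally show "ennreal \<bar>\<integral>y. F y s \<partial>lborel\<bar> \<le> indicator {0..c} s * ennreal \<bar>Gp (x, s)\<bar>" .
    qed
    finally show ?thesis .
  qed
  have "(\<integral>\<^sup>+x. ennreal \<bar>conv P b x\<bar> \<partial>lborel)
      \<le> (\<integral>\<^sup>+x. \<integral>\<^sup>+s. indicator {0..c} s * ennreal \<bar>Gp (x, s)\<bar> \<partial>lborel \<partial>lborel)"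
    by (rule nn_integral_mono) (rule pt)
  also have "\<dots> = (\<integral>\<^sup>+s. \<integral>\<^sup>+x. indicator {0..c} s * ennreal \<bar>Gp (x, s)\<bar> \<partial>lborel \<partial>lborel)"
  proof (rule lborel_pair.Fubini'[symmetric])
    show "(\<lambda>(x, s). indicator {0..c} s * ennreal \<bar>Gp (x, s)\<bar>) \<in> borel_measurable (lborel \<Otimes>\<^sub>M lborel)"
    proof -
      have e: "(\<lambda>(x, s). indicator {0..c} s * ennreal \<bar>Gp (x, s)\<bar>) = (\<lambda>p. indicator {0..c} (snd p) * ennreal \<bar>Gp p\<bar>)"
        by (auto simp: fun_eq_iff)
      show ?thesis unfolding e by measurable
    qed
  qed
  also have "\<dots> = (\<integral>\<^sup>+s. indicator {0..c} s * (\<integral>\<^sup>+x. ennreal \<bar>Gp (x, s)\<bar> \<partial>lborel) \<partial>lborel)"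
  proof (rule nn_integral_cong)
    fix s
    have "(\<lambda>x. ennreal \<bar>Gp (x, s)\<bar>) \<in> borel_measurable lborel" by measurable
    then show "(\<integral>\<^sup>+x. indicator {0..c} s * ennreal \<bar>Gp (x, s)\<bar> \<partial>lborel)
        = indicator {0..c} s * (\<integral>\<^sup>+x. ennreal \<bar>Gp (x, s)\<bar> \<partial>lborel)"
      by (rule nn_integral_cmult)
  qed
  also have "\<dots> \<le> (\<integral>\<^sup>+s. NB * indicator {0..c} s \<partial>lborel)"
    by (rule nn_integral_mono) (use lev in \<open>auto simp: indicator_def\<close>)
  also have "\<dots> = NB * ennreal c"
    using c0 by (simp add: nn_integral_cmult_indicator)
  finally show ?thesis unfolding NB_def by (simp add: mult.commute)
qed



lemma conv_integrable:
  fixes Q b :: "real \<Rightarrow> real"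
  assumes [measurable]: "Q \<in> borel_measurable borel" and Qb: "\<And>z. \<bar>Q z\<bar> \<le> M"
    and bint: "integrable lborel b"
  shows "integrable lborel (\<lambda>y. Q (x - y) * b y)"
proof (rule Bochner_Integration.integrable_bound[where f="\<lambda>y. M * b y"])
  have [measurable]: "b \<in> borel_measurable borel" using bint by (simp add: borel_measurable_integrable)
  show "integrable lborel (\<lambda>y. M * b y)" using bint by simp
  show "(\<lambda>y. Q (x - y) * b y) \<in> borel_measurable lborel" by measurable
  show "AE y in lborel. norm (Q (x - y) * b y) \<le> norm (M * b y)"
  proof (intro AE_I2)
    fix y
    have "\<bar>Q (x - y)\<bar> * \<bar>b y\<bar> \<le> M * \<bar>b y\<bar>" by (rule mult_right_mono[OF Qb abs_ge_zero])
    moreover have "0 \<le> M" using Qb[of 0] by linarith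
    ultimately show "norm (Q (x - y) * b y) \<le> norm (M * b y)" by (simp add: abs_mult)
  qed
qed

lemma NB_eq:
  fixes b :: "real \<Rightarrow> real"
  assumes bint: "integrable lborel b" and bsupp: "\<And>x. x \<notin> {0..1} \<Longrightarrow> b x = 0"
    and avg: "(\<integral>y. b y \<partial>lborel) = 0"
  shows "(\<integral>\<^sup>+u. ennreal \<bar>Bf b u\<bar> \<partial>lborel) = ennreal (normW b)"
proof -
  have [measurable]: "b \<in> borel_measurable borel" using bint by (simp add: borel_measurable_integrable)
  have [measurable]: "Bf b \<in> borel_measurable borel" by (rule Bf_measurable) measurable
  have e: "indicator {0..1} u *\<^sub>R \<bar>\<integral>t\<in>{0..u}. b t \<partial>lborel\<bar> = \<bar>Bf b u\<bar>" for u
  proof -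
    consider "u < 0" | "0 \<le> u" "u \<le> 1" | "1 < u" by linarith
    then show ?thesis
    proof cases
      case 1
      have "(\<lambda>y. indicator {..u} y * b y) = (\<lambda>y. 0)"
        using 1 bsupp by (auto simp: fun_eq_iff indicator_def)
      then show ?thesis using 1 by (simp add: Bf_def)
    next
      case 2
      have "(\<lambda>y. indicator {..u} y * b y) = (\<lambda>y. indicator {0..u} y *\<^sub>R b y)"
        using bsupp by (auto simp: fun_eq_iff indicator_def)
      then show ?thesis using 2 by (simp add: Bf_def set_lebesgue_integral_def)
    next
      case 3
      have "(\<lambda>y. indicator {..u} y * b y) = b"
        using 3 bsupp by (auto simp: fun_eq_iff indicator_def)
      then show ?thesis using 3 avg by (simp add: Bf_def)
    qed
  qed
  have nW: "normW b = (\<integral>u. \<bar>Bf b u\<bar> \<partial>lborel)"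
    using e unfolding normW_def set_lebesgue_integral_def by (simp only:)
  define L where "L = (\<integral>y. \<bar>b y\<bar> \<partial>lborel)"
  have bnd: "\<bar>Bf b u\<bar> \<le> L" for u
    unfolding Bf_def L_def
  proof (rule integral_abs_bound_integral)
    show "integrable lborel (\<lambda>y. indicator {..u} y * b y)"
      using integrable_mult_indicator[of "{..u}" lborel b] bint by simp
    show "integrable lborel (\<lambda>y. \<bar>b y\<bar>)" using bint by simp
    show "\<bar>indicator {..u} y * b y\<bar> \<le> \<bar>b y\<bar>" for y by (simp add: indicator_def)
  qed
  have intB: "integrable lborel (\<lambda>u. \<bar>Bf b u\<bar>)"
  proof (rule Bochner_Integration.integrable_bound[where f="\<lambda>u::real. L * indicator {0..1} u"])
    show "integrable lborel (\<lambda>u::real. L * indicator {0..1} u :: real)"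
    proof -
      have ii: "integrable lborel (indicator {0..1::real} :: real \<Rightarrow> real)"
        by (rule integrable_real_indicator) auto
      show ?thesis by (rule integrable_mult_right) (rule ii)
    qed
    show "(\<lambda>u. \<bar>Bf b u\<bar>) \<in> borel_measurable lborel" by measurable
    show "AE u in lborel. norm \<bar>Bf b u\<bar> \<le> norm (L * indicator {0..1} u :: real)"
    proof (intro AE_I2)
      fix u
      have "\<bar>Bf b u\<bar> = indicator {0..1} u * \<bar>Bf b u\<bar>"
      proof (cases "u \<in> {0..1}")
        case False
        then have "\<bar>Bf b u\<bar> = 0" using e[of u] by simp
        then show ?thesis by simp
      qed simp
      also have "\<dots> \<le> indicator {0..1} u * L" by (rule mult_left_mono[OF bnd]) simp
      finally have h: "\<bar>Bf b u\<bar> \<le> indicator {0..1} u * L" .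
      have L0: "0 \<le> L" using bnd[of u] by linarith
      show "norm \<bar>Bf b u\<bar> \<le> norm (L * indicator {0..1} u :: real)"
        using h L0 by (auto simp: indicator_def split: if_splits)
    qed
  qed
  show ?thesis unfolding nW by (rule nn_integral_eq_integral[OF intB]) simp
qed

lemma normW_nonneg: "0 \<le> normW f"
  unfolding normW_def set_lebesgue_integral_def
  by (rule Bochner_Integration.integral_nonneg) (simp add: indicator_def)

lemma core:
  fixes a b :: "real \<Rightarrow> real"
  assumes bv: "bounded_variation a" and supp: "\<And>x. \<bar>x\<bar> > K \<Longrightarrow> a x = 0"
    and bint: "integrable lborel b" and bsupp: "\<And>x. x \<notin> {0..1} \<Longrightarrow> b x = 0"
    and bavg: "(\<integral>x\<in>{0..1}. b x \<partial>lborel) = 0"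
  shows "conv a b \<in> borel_measurable borel"
    and "(\<integral>\<^sup>+x. ennreal \<bar>conv a b x\<bar> \<partial>lborel) \<le> ennreal (Var a * normW b)"
    and "\<And>x. \<bar>x\<bar> > K + 1 \<Longrightarrow> conv a b x = 0"
proof -
  have mb0[measurable]: "b \<in> borel_measurable borel" using bint by (simp add: borel_measurable_integrable)
  have ma0[measurable]: "a \<in> borel_measurable borel" by (rule bv_measurable[OF bv supp])
  show "conv a b \<in> borel_measurable borel" by (rule conv_measurable[OF ma0 mb0])
  have bb: "(\<lambda>x. indicator {0..1} x *\<^sub>R b x) = b" using bsupp by (auto simp: fun_eq_iff indicator_def)
  have avg: "(\<integral>y. b y \<partial>lborel) = 0" using bavg unfolding set_lebesgue_integral_def bb .
  define P where "P = (\<lambda>x. (Vf a x + a x) / 2)"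
  define N where "N = (\<lambda>x. (Vf a x - a x) / 2)"
  have J1: "mono P" unfolding P_def by (rule jordan(1)[OF bv supp])
  have J2: "mono N" unfolding N_def by (rule jordan(2)[OF bv supp])
  have J3: "\<And>x. 0 \<le> P x" unfolding P_def by (rule jordan(3)[OF bv supp])
  have J4: "\<And>x. P x \<le> Var a / 2" unfolding P_def by (rule jordan(4)[OF bv supp])
  have J5: "\<And>x. 0 \<le> N x" unfolding N_def by (rule jordan(5)[OF bv supp])
  have J6: "\<And>x. N x \<le> Var a / 2" unfolding N_def by (rule jordan(6)[OF bv supp])
  have J7: "\<And>x. a x = P x - N x" unfolding P_def N_def by (rule jordan(7)[OF bv supp])
  note J = J1 J2 J3 J4 J5 J6 J7
  have mPm[measurable]: "P \<in> borel_measurable borel" by (rule borel_measurable_mono[OF J(1)])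
  have mNm[measurable]: "N \<in> borel_measurable borel" by (rule borel_measurable_mono[OF J(2)])
  have mb: "b \<in> borel_measurable borel" using bint by (simp add: borel_measurable_integrable)
  have Pb: "\<bar>P z\<bar> \<le> Var a / 2" "\<bar>N z\<bar> \<le> Var a / 2" for z
    using J(3)[of z] J(4)[of z] J(5)[of z] J(6)[of z] by auto
  have split: "conv a b x = conv P b x - conv N b x" for x
  proof -
    have "conv a b x = (\<integral>y. P (x - y) * b y - N (x - y) * b y \<partial>lborel)"
      unfolding conv_def using J(7) by (simp add: left_diff_distrib)
    also have "\<dots> = conv P b x - conv N b x"
      unfolding conv_def
      by (rule Bochner_Integration.integral_diff[OF conv_integrable[OF mPm Pb(1) bint] conv_integrable[OF mNm Pb(2) bint]])
    finally show ?thesis .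
  qed
  have cPm: "conv P b \<in> borel_measurable borel" by (rule conv_measurable[OF mPm mb])
  have cNm: "conv N b \<in> borel_measurable borel" by (rule conv_measurable[OF mNm mb])
  have cPm': "(\<lambda>x. ennreal \<bar>conv P b x\<bar>) \<in> borel_measurable lborel"
    using cPm by simp
  have cNm': "(\<lambda>x. ennreal \<bar>conv N b x\<bar>) \<in> borel_measurable lborel"
    using cNm by simp
  define NB where "NB = (\<integral>\<^sup>+u. ennreal \<bar>Bf b u\<bar> \<partial>lborel)"
  have NBe: "NB = ennreal (normW b)" unfolding NB_def by (rule NB_eq[OF bint bsupp avg])
  have "(\<integral>\<^sup>+x. ennreal \<bar>conv a b x\<bar> \<partial>lborel)
      \<le> (\<integral>\<^sup>+x. ennreal \<bar>conv P b x\<bar> + ennreal \<bar>conv N b x\<bar> \<partial>lborel)"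
  proof (rule nn_integral_mono)
    fix x
    have "\<bar>conv a b x\<bar> \<le> \<bar>conv P b x\<bar> + \<bar>conv N b x\<bar>" unfolding split by linarith
    then show "ennreal \<bar>conv a b x\<bar> \<le> ennreal \<bar>conv P b x\<bar> + ennreal \<bar>conv N b x\<bar>"
      by (simp add: ennreal_plus[symmetric] del: ennreal_plus)
  qed
  also have "\<dots> = (\<integral>\<^sup>+x. ennreal \<bar>conv P b x\<bar> \<partial>lborel) + (\<integral>\<^sup>+x. ennreal \<bar>conv N b x\<bar> \<partial>lborel)"
    by (rule nn_integral_add[OF cPm' cNm'])
  also have "\<dots> \<le> ennreal (Var a / 2) * NB + ennreal (Var a / 2) * NB"
    unfolding NB_def
    by (intro add_mono mono_core[OF J(1) J(3) J(4) bint avg] mono_core[OF J(2) J(5) J(6) bint avg])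
  also have "\<dots> = ennreal (Var a) * NB"
    using Var_ge0[OF bv] by (simp add: distrib_right[symmetric] ennreal_plus[symmetric] del: ennreal_plus)
  also have "\<dots> = ennreal (Var a * normW b)"
    unfolding NBe by (simp add: ennreal_mult Var_ge0[OF bv] normW_nonneg)
  finally show "(\<integral>\<^sup>+x. ennreal \<bar>conv a b x\<bar> \<partial>lborel) \<le> ennreal (Var a * normW b)" .
  show "conv a b x = 0" if x: "\<bar>x\<bar> > K + 1" for x
  proof -
    have "a (x - y) * b y = 0" for y
    proof (cases "y \<in> {0..1}")
      case True
      have "\<bar>x\<bar> \<le> \<bar>x - y\<bar> + \<bar>y\<bar>" using abs_triangle_ineq[of "x - y" y] by simp
      moreover have "\<bar>y\<bar> \<le> 1" using True by auto
      ultimately have "\<bar>x - y\<bar> > K" using x by linarith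
      then show ?thesis using supp by simp
    qed (simp add: bsupp)
    then have "(\<lambda>y. a (x - y) * b y) = (\<lambda>y. 0)" by (rule ext)
    then show ?thesis unfolding conv_def by simp
  qed
qed



lemma int_cast_le: "(i::int) \<le> j \<Longrightarrow> real_of_int i \<le> real_of_int j" by simp
lemma int_cast_lt: "real_of_int i < real_of_int j + 1 \<Longrightarrow> (i::int) \<le> j"
proof -
  assume "real_of_int i < real_of_int j + 1"
  then have "real_of_int i < real_of_int (j + 1)" by simp
  then have "i < j + 1" by (simp only: of_int_less_iff)
  then show "i \<le> j" by simp
qed

lemma sum_le_one_disj:
  fixes T :: "'a \<Rightarrow> real"
  assumes fin: "finite I" and T0: "\<And>i. 0 \<le> T i" and T1: "\<And>i. T i \<le> 1"
    and dj: "\<And>i j. T i \<noteq> 0 \<Longrightarrow> T j \<noteq> 0 \<Longrightarrow> i = j"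
  shows "sum T I \<le> 1"
proof (cases "\<exists>i\<in>I. T i \<noteq> 0")
  case True
  then obtain i0 where i0: "i0 \<in> I" "T i0 \<noteq> 0" by blast
  have "sum T I = T i0 + sum T (I - {i0})" by (rule sum.remove[OF fin i0(1)])
  also have "sum T (I - {i0}) = 0" by (rule sum.neutral) (use dj i0 in blast)
  finally show ?thesis using T1[of i0] by simp
next
  case False
  then have "sum T I = 0" by (intro sum.neutral) blast
  then show ?thesis by simp
qed

lemma fold_bound:
  fixes h :: "real \<Rightarrow> real"
  assumes hm[measurable]: "h \<in> borel_measurable borel" and hs: "\<And>x. \<bar>x\<bar> > M \<Longrightarrow> h x = 0"
  shows "(\<integral>\<^sup>+y. ennreal (indicator {0..1} y * \<bar>pushforward_pi h y\<bar>) \<partial>lborel) \<le> (\<integral>\<^sup>+x. ennreal \<bar>h x\<bar> \<partial>lborel)"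
proof -
  define n where "n = int (nat \<lceil>M\<rceil>) + 1"
  define I where "I = {-n..n}"
  have fin: "finite I" by (simp add: I_def)
  have nM: "M \<le> real_of_int n" "1 \<le> n"
  proof -
    have "M \<le> real_of_int \<lceil>M\<rceil>" by (rule le_of_int_ceiling)
    also have "\<dots> \<le> real_of_int (int (nat \<lceil>M\<rceil>))" by simp
    also have "\<dots> \<le> real_of_int n" unfolding n_def by simp
    finally show "M \<le> real_of_int n" .
    show "1 \<le> n" unfolding n_def by simp
  qed
  have zero: "h (2 * of_int i + y) = 0 \<and> h (2 * of_int i - y) = 0" if i: "i \<notin> I" and y: "y \<in> {0..1}" for i y
  proof -
    have "n + 1 \<le> i \<or> i \<le> -n - 1" using i by (auto simp: I_def)
    then have "real_of_int n + 1 \<le> real_of_int i \<or> real_of_int i \<le> - real_of_int n - 1"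
    proof
      assume "n + 1 \<le> i" then have "real_of_int (n + 1) \<le> real_of_int i" by (rule int_cast_le)
      then show ?thesis by simp
    next
      assume "i \<le> -n - 1" then have "real_of_int i \<le> real_of_int (-n - 1)" by (rule int_cast_le)
      then show ?thesis by simp
    qed
    then have "\<bar>2 * of_int i + y\<bar> > M" "\<bar>2 * of_int i - y\<bar> > M" using y nM by auto
    then show ?thesis using hs by simp
  qed
  have push: "pushforward_pi h y = (\<Sum>i\<in>I. h (2 * of_int i + y) + h (2 * of_int i - y))" if y: "y \<in> {0..1}" for y
  proof -
    have "pushforward_pi h y = infsum (\<lambda>i. h (2 * of_int i + y) + h (2 * of_int i - y)) I"
      unfolding pushforward_pi_def
      by (rule infsum_cong_neutral) (use zero[OF _ y] in auto)
    then show ?thesis using fin by simp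
  qed
  define A where "A i y = ennreal (indicator {0<..<1} y * \<bar>h (2 * of_int i + y)\<bar>)" for i :: int and y :: real
  define B where "B i y = ennreal (indicator {0<..<1} y * \<bar>h (2 * of_int i - y)\<bar>)" for i :: int and y :: real
  have Am[measurable]: "A i \<in> borel_measurable lborel" for i unfolding A_def[abs_def] by measurable
  have Bm[measurable]: "B i \<in> borel_measurable lborel" for i unfolding B_def[abs_def] by measurable
  have "(\<integral>\<^sup>+y. ennreal (indicator {0..1} y * \<bar>pushforward_pi h y\<bar>) \<partial>lborel)
      \<le> (\<integral>\<^sup>+y. (\<Sum>i\<in>I. A i y + B i y) \<partial>lborel)"
  proof (rule nn_integral_mono_AE)
    show "AE y in lborel. ennreal (indicator {0..1} y * \<bar>pushforward_pi h y\<bar>) \<le> (\<Sum>i\<in>I. A i y + B i y)"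
      using AE_lborel_singleton[of 0] AE_lborel_singleton[of 1]
    proof eventually_elim
      case (elim y)
      show ?case
      proof (cases "y \<in> {0..1}")
        case False
        then show ?thesis by simp
      next
        case True
        then have y01: "y \<in> {0<..<1}" using elim by auto
        have "\<bar>pushforward_pi h y\<bar> \<le> (\<Sum>i\<in>I. \<bar>h (2 * of_int i + y) + h (2 * of_int i - y)\<bar>)"
          unfolding push[OF True] by (rule sum_abs)
        also have "\<dots> \<le> (\<Sum>i\<in>I. \<bar>h (2 * of_int i + y)\<bar> + \<bar>h (2 * of_int i - y)\<bar>)"
          by (intro sum_mono abs_triangle_ineq)
        finally have "ennreal (indicator {0..1} y * \<bar>pushforward_pi h y\<bar>)
            \<le> ennreal (\<Sum>i\<in>I. \<bar>h (2 * of_int i + y)\<bar> + \<bar>h (2 * of_int i - y)\<bar>)"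
          using True by (intro ennreal_leI) simp
        also have "\<dots> = (\<Sum>i\<in>I. A i y + B i y)"
          using y01 by (simp add: A_def B_def ennreal_plus[symmetric] del: ennreal_plus)
        finally show ?thesis .
      qed
    qed
  qed
  also have "\<dots> = (\<Sum>i\<in>I. (\<integral>\<^sup>+y. A i y \<partial>lborel) + (\<integral>\<^sup>+y. B i y \<partial>lborel))"
    by (subst nn_integral_sum) (auto intro!: sum.cong nn_integral_add)
  also have "\<dots> = (\<Sum>i\<in>I. (\<integral>\<^sup>+x. ennreal (indicator {2 * of_int i<..<2 * of_int i + 1} x * \<bar>h x\<bar>) \<partial>lborel)
       + (\<integral>\<^sup>+x. ennreal (indicator {2 * of_int i - 1<..<2 * of_int i} x * \<bar>h x\<bar>) \<partial>lborel))"
  proof (rule sum.cong[OF refl])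
    fix i :: int
    define f where "f x = ennreal (indicator {2 * of_int i<..<2 * of_int i + 1} x * \<bar>h x\<bar>)" for x
    define g where "g x = ennreal (indicator {2 * of_int i - 1<..<2 * of_int i} x * \<bar>h x\<bar>)" for x
    have fm: "f \<in> borel_measurable borel" unfolding f_def[abs_def] by measurable
    have gm: "g \<in> borel_measurable borel" unfolding g_def[abs_def] by measurable
    have "(\<integral>\<^sup>+x. f x \<partial>lborel) = (\<integral>\<^sup>+y. f (2 * of_int i + y) \<partial>lborel)"
      using nn_integral_real_affine[OF fm, of 1 "2 * of_int i"] by simp
    also have "(\<lambda>y. f (2 * of_int i + y)) = A i"
      by (auto simp: f_def A_def fun_eq_iff indicator_def)
    finally have 1: "(\<integral>\<^sup>+y. A i y \<partial>lborel) = (\<integral>\<^sup>+x. f x \<partial>lborel)" by simp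
    have "(\<integral>\<^sup>+x. g x \<partial>lborel) = (\<integral>\<^sup>+y. g (2 * of_int i - y) \<partial>lborel)"
      using nn_integral_real_affine[OF gm, of "-1" "2 * of_int i"] by simp
    also have "(\<lambda>y. g (2 * of_int i - y)) = B i"
      by (auto simp: g_def B_def fun_eq_iff indicator_def)
    finally have 2: "(\<integral>\<^sup>+y. B i y \<partial>lborel) = (\<integral>\<^sup>+x. g x \<partial>lborel)" by simp
    show "(\<integral>\<^sup>+y. A i y \<partial>lborel) + (\<integral>\<^sup>+y. B i y \<partial>lborel) =
      (\<integral>\<^sup>+x. ennreal (indicator {2 * of_int i<..<2 * of_int i + 1} x * \<bar>h x\<bar>) \<partial>lborel)
       + (\<integral>\<^sup>+x. ennreal (indicator {2 * of_int i - 1<..<2 * of_int i} x * \<bar>h x\<bar>) \<partial>lborel)"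
      unfolding 1 2 f_def g_def ..
  qed
  also have "\<dots> = (\<integral>\<^sup>+x. (\<Sum>i\<in>I. ennreal (indicator {2 * of_int i<..<2 * of_int i + 1} x * \<bar>h x\<bar>)
       + ennreal (indicator {2 * of_int i - 1<..<2 * of_int i} x * \<bar>h x\<bar>)) \<partial>lborel)"
    by (subst nn_integral_sum) (auto intro!: sum.cong nn_integral_add[symmetric])
  also have "\<dots> \<le> (\<integral>\<^sup>+x. ennreal \<bar>h x\<bar> \<partial>lborel)"
  proof (rule nn_integral_mono)
    fix x :: real
    define T :: "int \<Rightarrow> real" where "T i = indicator {2 * of_int i<..<2 * of_int i + 1} x + indicator {2 * of_int i - 1<..<2 * of_int i} x" for i :: int
    have T0: "0 \<le> T i" for i by (simp add: T_def)
    have T1: "T i \<le> 1" for i by (auto simp: T_def indicator_def)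
    have Tin: "T i \<noteq> 0 \<Longrightarrow> 2 * of_int i - 1 < x \<and> x < 2 * of_int i + 1" for i
      by (cases "2 * real_of_int i < x \<and> x < 2 * real_of_int i + 1";
          cases "2 * real_of_int i - 1 < x \<and> x < 2 * real_of_int i") (auto simp: T_def indicator_def)
    have dj: "T i \<noteq> 0 \<Longrightarrow> T j \<noteq> 0 \<Longrightarrow> i = j" for i j
    proof -
      assume "T i \<noteq> 0" "T j \<noteq> 0"
      from Tin[OF this(1)] Tin[OF this(2)]
      have "real_of_int i < real_of_int j + 1" "real_of_int j < real_of_int i + 1" by linarith+
      then have "i \<le> j" "j \<le> i" by (auto intro: int_cast_lt)
      then show "i = j" by simp
    qed
    have S1: "sum T I \<le> 1" by (rule sum_le_one_disj[OF fin T0 T1 dj])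
    have "(\<Sum>i\<in>I. ennreal (indicator {2 * of_int i<..<2 * of_int i + 1} x * \<bar>h x\<bar>)
       + ennreal (indicator {2 * of_int i - 1<..<2 * of_int i} x * \<bar>h x\<bar>)) = ennreal (sum T I * \<bar>h x\<bar>)"
      by (simp add: T_def ennreal_plus[symmetric] sum_distrib_right distrib_right del: ennreal_plus)
    also have "\<dots> \<le> ennreal \<bar>h x\<bar>"
      by (intro ennreal_leI) (use mult_right_mono[OF S1 abs_ge_zero[of "h x"]] in simp)
    finally show "(\<Sum>i\<in>I. ennreal (indicator {2 * of_int i<..<2 * of_int i + 1} x * \<bar>h x\<bar>)
       + ennreal (indicator {2 * of_int i - 1<..<2 * of_int i} x * \<bar>h x\<bar>)) \<le> ennreal \<bar>h x\<bar>" .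
  qed
  finally show ?thesis .
qed



lemma rho_vs1:
  assumes xi: "\<xi> > 0" and s: "s \<in> variation_sums (rho_xi \<rho> \<xi>)"
  shows "s * \<xi> \<in> variation_sums \<rho>"
proof -
  obtain p n where sp: "s = (\<Sum>i<n. \<bar>rho_xi \<rho> \<xi> (p (Suc i)) - rho_xi \<rho> \<xi> (p i)\<bar>)"
    and p: "\<forall>i<n. p i \<le> p (Suc i)" using s by (rule vs_elim)
  define q where "q i = p i / \<xi>" for i
  have qm: "\<forall>i<n. q i \<le> q (Suc i)" using p xi by (auto simp: q_def divide_right_mono)
  have "s = (\<Sum>i<n. \<bar>\<rho> (q (Suc i)) - \<rho> (q i)\<bar> / \<xi>)"
    unfolding sp rho_xi_def q_def using xi
    by (intro sum.cong refl) (simp add: diff_divide_distrib[symmetric] abs_divide)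
  also have "\<dots> = (\<Sum>i<n. \<bar>\<rho> (q (Suc i)) - \<rho> (q i)\<bar>) / \<xi>" by (simp add: sum_divide_distrib)
  finally have "s * \<xi> = (\<Sum>i<n. \<bar>\<rho> (q (Suc i)) - \<rho> (q i)\<bar>)" using xi by simp
  then show ?thesis using vs_intro[OF qm, of \<rho>] by simp
qed

lemma rho_vs2:
  assumes xi: "\<xi> > 0" and s: "s \<in> variation_sums \<rho>"
  shows "s / \<xi> \<in> variation_sums (rho_xi \<rho> \<xi>)"
proof -
  obtain q n where sq: "s = (\<Sum>i<n. \<bar>\<rho> (q (Suc i)) - \<rho> (q i)\<bar>)"
    and q: "\<forall>i<n. q i \<le> q (Suc i)" using s by (rule vs_elim)
  define p where "p i = \<xi> * q i" for i
  have pm: "\<forall>i<n. p i \<le> p (Suc i)" using q xi by (auto simp: p_def)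
  have "(\<Sum>i<n. \<bar>rho_xi \<rho> \<xi> (p (Suc i)) - rho_xi \<rho> \<xi> (p i)\<bar>) = (\<Sum>i<n. \<bar>\<rho> (q (Suc i)) - \<rho> (q i)\<bar> / \<xi>)"
    unfolding rho_xi_def p_def using xi
    by (intro sum.cong refl) (simp add: diff_divide_distrib[symmetric] abs_divide)
  also have "\<dots> = s / \<xi>" unfolding sq by (simp add: sum_divide_distrib)
  finally show ?thesis using vs_intro[OF pm, of "rho_xi \<rho> \<xi>"] by simp
qed

lemma rho_Var:
  assumes xi: "\<xi> > 0" and bv: "bounded_variation \<rho>"
  shows "bounded_variation (rho_xi \<rho> \<xi>)" "Var (rho_xi \<rho> \<xi>) = Var \<rho> / \<xi>"
proof -
  have le: "s \<le> Var \<rho> / \<xi>" if "s \<in> variation_sums (rho_xi \<rho> \<xi>)" for s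
  proof -
    have "s * \<xi> \<le> Var \<rho>" by (rule vs_le_Var[OF bv rho_vs1[OF xi that]])
    then show ?thesis using xi by (simp add: pos_le_divide_eq)
  qed
  show bv2: "bounded_variation (rho_xi \<rho> \<xi>)"
    unfolding bounded_variation_def using le by (intro bdd_aboveI) auto
  have 1: "Var (rho_xi \<rho> \<xi>) \<le> Var \<rho> / \<xi>"
    unfolding Var_def[of "rho_xi \<rho> \<xi>"] using vs_zero[of "rho_xi \<rho> \<xi>"] le
    by (intro cSup_least) auto
  have "s \<le> \<xi> * Var (rho_xi \<rho> \<xi>)" if "s \<in> variation_sums \<rho>" for s
  proof -
    have "s / \<xi> \<le> Var (rho_xi \<rho> \<xi>)" by (rule vs_le_Var[OF bv2 rho_vs2[OF xi that]])
    then show ?thesis using xi by (simp add: pos_divide_le_eq mult.commute)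
  qed
  then have "Var \<rho> \<le> \<xi> * Var (rho_xi \<rho> \<xi>)"
    unfolding Var_def[of \<rho>] using vs_zero[of \<rho>] by (intro cSup_least) auto
  then have 2: "Var \<rho> / \<xi> \<le> Var (rho_xi \<rho> \<xi>)" using xi by (simp add: pos_divide_le_eq mult.commute)
  show "Var (rho_xi \<rho> \<xi>) = Var \<rho> / \<xi>" using 1 2 by linarith
qed

lemma hat_ext_ind: "hat_ext f x = indicator {0..1} x * f x"
  unfolding hat_ext_def indicator_def by auto

lemma ind_ii: "(x::real) \<le> 1 \<Longrightarrow> indicator {0..x} (t::real) * (indicator {0..1} t :: real) = indicator {0..x} t"
  unfolding indicator_def by auto

lemma ind_ii2: "indicator {0..1} (t::real) * (indicator {0..1} t :: real) = indicator {0..1} t"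
  unfolding indicator_def by auto

lemma set_int_le:
  fixes f :: "real \<Rightarrow> real"
  assumes "(\<integral>\<^sup>+x. ennreal (indicator A x * \<bar>f x\<bar>) \<partial>lborel) \<le> ennreal R" and R: "0 \<le> R"
  shows "(\<integral>x\<in>A. \<bar>f x\<bar> \<partial>lborel) \<le> R"
proof (cases "integrable lborel (\<lambda>x. indicator A x * \<bar>f x\<bar>)")
  case True
  have "ennreal (\<integral>x. indicator A x * \<bar>f x\<bar> \<partial>lborel) = (\<integral>\<^sup>+x. ennreal (indicator A x * \<bar>f x\<bar>) \<partial>lborel)"
    by (rule nn_integral_eq_integral[OF True, symmetric]) simp
  with assms(1) have "ennreal (\<integral>x. indicator A x * \<bar>f x\<bar> \<partial>lborel) \<le> ennreal R" by simp
  then have "(\<integral>x. indicator A x * \<bar>f x\<bar> \<partial>lborel) \<le> R" using R by (simp add: ennreal_le_iff)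
  then show ?thesis by (simp add: set_lebesgue_integral_def)
next
  case False
  then show ?thesis using R by (simp add: set_lebesgue_integral_def not_integrable_integral_eq)
qed

lemma hat_bound:
  fixes a b :: "real \<Rightarrow> real"
  assumes bv: "bounded_variation a" and supp: "\<And>x. \<bar>x\<bar> > K \<Longrightarrow> a x = 0"
    and bint: "integrable lborel b" and bsupp: "\<And>x. x \<notin> {0..1} \<Longrightarrow> b x = 0"
    and bavg: "(\<integral>x\<in>{0..1}. b x \<partial>lborel) = 0"
  shows "(\<integral>y\<in>{0..1}. \<bar>pushforward_pi (conv a b) y\<bar> \<partial>lborel) \<le> Var a * normW b"
proof (rule set_int_le)
  note C = core[OF bv supp bint bsupp bavg]
  have "(\<integral>\<^sup>+y. ennreal (indicator {0..1} y * \<bar>pushforward_pi (conv a b) y\<bar>) \<partial>lborel)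
      \<le> (\<integral>\<^sup>+x. ennreal \<bar>conv a b x\<bar> \<partial>lborel)"
    by (rule fold_bound[OF C(1) C(3)])
  also have "\<dots> \<le> ennreal (Var a * normW b)" by (rule C(2))
  finally show "(\<integral>\<^sup>+y. ennreal (indicator {0..1} y * \<bar>pushforward_pi (conv a b) y\<bar>) \<partial>lborel)
      \<le> ennreal (Var a * normW b)" .
  show "0 \<le> Var a * normW b" by (simp add: Var_ge0[OF bv] normW_nonneg)
qed

theorem lemma77:
  fixes a b \<rho> :: "real \<Rightarrow> real" and \<xi> :: real
  assumes a_bv: "bounded_variation a"
    and a_supp: "\<And>x. x \<notin> {-1/2<..<1/2} \<Longrightarrow> a x = 0"
    and b_int: "integrable lborel b"
    and b_supp: "\<And>x. x \<notin> {0..1} \<Longrightarrow> b x = 0"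
    and b_avg: "(\<integral>x\<in>{0..1}. b x \<partial>lborel) = 0"
    and rho_bv: "bounded_variation \<rho>"
    and rho_supp: "\<And>x. x \<notin> {-1/2..1/2} \<Longrightarrow> \<rho> x = 0"
    and rho_int: "integrable lborel \<rho>"
    and rho_one: "(\<integral>x. \<rho> x \<partial>lborel) = 1"
    and xi_pos: "\<xi> > 0"
  shows "(\<integral>x\<in>{-1..2}. \<bar>conv a b x\<bar> \<partial>lborel) \<le> Var a * normW b
    \<and> (\<integral>y\<in>{0..1}. \<bar>hat_conv a b y\<bar> \<partial>lborel) \<le> Var a * normW b
    \<and> (\<forall>f. set_integrable lborel {0..1} f \<and> (\<integral>x\<in>{0..1}. f x \<partial>lborel) = 0 \<longrightarrow>
          (\<integral>y\<in>{0..1}. \<bar>N_op \<rho> \<xi> f y\<bar> \<partial>lborel) \<le> Var (rho_xi \<rho> \<xi>) * normW f)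
    \<and> Var (rho_xi \<rho> \<xi>) = Var \<rho> / \<xi>"
proof (intro conjI allI impI)
  have asupp: "\<bar>x\<bar> > 1/2 \<Longrightarrow> a x = 0" for x
  proof -
    assume h: "\<bar>x\<bar> > 1/2"
    have "x \<notin> {-1/2<..<1/2}"
    proof (cases "0 \<le> x")
      case True then show ?thesis using h by simp
    next
      case False then show ?thesis using h by simp
    qed
    then show "a x = 0" by (rule a_supp)
  qed
  note C = core[OF a_bv asupp b_int b_supp b_avg]
  show "(\<integral>x\<in>{-1..2}. \<bar>conv a b x\<bar> \<partial>lborel) \<le> Var a * normW b"
  proof (rule set_int_le)
    have "(\<integral>\<^sup>+x. ennreal (indicator {-1..2} x * \<bar>conv a b x\<bar>) \<partial>lborel) \<le> (\<integral>\<^sup>+x. ennreal \<bar>conv a b x\<bar> \<partial>lborel)"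
      by (intro nn_integral_mono ennreal_leI) (simp add: indicator_def)
    also have "\<dots> \<le> ennreal (Var a * normW b)" by (rule C(2))
    finally show "(\<integral>\<^sup>+x. ennreal (indicator {-1..2} x * \<bar>conv a b x\<bar>) \<partial>lborel) \<le> ennreal (Var a * normW b)" .
    show "0 \<le> Var a * normW b" by (simp add: Var_ge0[OF a_bv] normW_nonneg)
  qed
  have hb: "hat_ext b = b" using b_supp by (auto simp: fun_eq_iff hat_ext_def)
  show "(\<integral>y\<in>{0..1}. \<bar>hat_conv a b y\<bar> \<partial>lborel) \<le> Var a * normW b"
    unfolding hat_conv_def hb by (rule hat_bound[OF a_bv asupp b_int b_supp b_avg])
  show VV: "Var (rho_xi \<rho> \<xi>) = Var \<rho> / \<xi>" by (rule rho_Var(2)[OF xi_pos rho_bv])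
  fix f :: "real \<Rightarrow> real"
  assume fa: "set_integrable lborel {0..1} f \<and> (\<integral>x\<in>{0..1}. f x \<partial>lborel) = 0"
  have hf: "hat_ext f = (\<lambda>x. indicator {0..1} x *\<^sub>R f x)"
    by (rule ext) (simp add: hat_ext_ind)
  have fint: "integrable lborel (hat_ext f)" using fa unfolding set_integrable_def hf by simp
  have fsupp: "hat_ext f x = 0" if "x \<notin> {0..1}" for x
    unfolding hat_ext_def using that by (rule if_not_P)
  have e1: "(\<lambda>x. indicator {0..1} x *\<^sub>R hat_ext f x) = (\<lambda>x. indicator {0..1} x *\<^sub>R f x)"
    by (rule ext) (simp add: hat_ext_ind mult.assoc[symmetric] ind_ii2)
  have favg: "(\<integral>x\<in>{0..1}. hat_ext f x \<partial>lborel) = 0"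
    using fa unfolding set_lebesgue_integral_def e1 by simp
  have e2: "(\<lambda>x. indicator {0..1} x *\<^sub>R \<bar>\<integral>t\<in>{0..x}. hat_ext f t \<partial>lborel\<bar>)
      = (\<lambda>x. indicator {0..1} x *\<^sub>R \<bar>\<integral>t\<in>{0..x}. f t \<partial>lborel\<bar>)"
  proof (rule ext)
    fix x :: real
    show "indicator {0..1} x *\<^sub>R \<bar>\<integral>t\<in>{0..x}. hat_ext f t \<partial>lborel\<bar>
      = indicator {0..1} x *\<^sub>R \<bar>\<integral>t\<in>{0..x}. f t \<partial>lborel\<bar>"
    proof (cases "x \<in> {0..1}")
      case True
      have "(\<lambda>t. indicator {0..x} t *\<^sub>R hat_ext f t) = (\<lambda>t. indicator {0..x} t *\<^sub>R f t)"
        using True by (intro ext) (simp add: hat_ext_ind mult.assoc[symmetric] ind_ii)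
      then show ?thesis by (simp add: set_lebesgue_integral_def)
    qed simp
  qed
  have nW: "normW (hat_ext f) = normW f"
    unfolding normW_def set_lebesgue_integral_def using e2[unfolded set_lebesgue_integral_def] by simp
  have rsupp: "\<bar>x\<bar> > \<xi> / 2 \<Longrightarrow> rho_xi \<rho> \<xi> x = 0" for x
  proof -
    assume "\<bar>x\<bar> > \<xi> / 2"
    then have "\<bar>x / \<xi>\<bar> > 1/2" using xi_pos by (simp add: abs_divide pos_less_divide_eq)
    then have "x / \<xi> \<notin> {-1/2..1/2}" by auto
    then show "rho_xi \<rho> \<xi> x = 0" by (simp add: rho_xi_def rho_supp)
  qed
  show "(\<integral>y\<in>{0..1}. \<bar>N_op \<rho> \<xi> f y\<bar> \<partial>lborel) \<le> Var (rho_xi \<rho> \<xi>) * normW f"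
    unfolding N_op_def hat_conv_def nW[symmetric]
    by (rule hat_bound[OF rho_Var(1)[OF xi_pos rho_bv] rsupp fint fsupp favg])
qed


end
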